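(* Let $B\in\mathbb{R}^{n\times d}$ with $\|B\|=R\in(0,\infty)$, $g^*:\mathbb{R}^n\to\mathbb{R}\cup\{+\infty\}$ proper, lower semicontinuous and $\gamma$-strongly convex ($\gamma\ge0$), $\ell:\mathbb{R}^d\to\mathbb{R}\cup\{+\infty\}$ proper, lower semicontinuous and $\sigma$-strongly convex ($\sigma\ge0$). For the PDA$^2$ algorithm in the context, for all $(u,v)\in\mathcal{X}\times\mathcal{Y}$ and $k\ge1$, $$\psi_k(y_k)\le A_kg^*(v)+\frac12\|v-y_0\|^2-\frac{1+\gamma A_k}{2}\|v-y_k\|^2,\qquad \phi_k(x_k)\le A_k\ell(u)+\frac12\|u-x_0\|^2-\frac{1+\sigma A_k}{2}\|u-x_k\|^2.$$
   Context: Norms are Euclidean; $\sigma$-strong convexity of $f$ means $f((1-\alpha)x+\alpha\hat x)\le(1-\alpha)f(x)+\alpha f(\hat x)-\frac\sigma2\alpha(1-\alpha)\|\hat x-x\|^2$ for all $x,\hat x$, $\alpha\in(0,1)$. $\mathcal{X}=\mathrm{dom}(\ell)$, $\mathcal{Y}=\mathrm{dom}(g^* )$. PDA$^2$ algorithm: given $(x_0,y_0),(u,v)\in\mathcal{X}\times\mathcal{Y}$, set $a_0=A_0=0$, $x_{-1}=x_0$, $\phi_0(x)=\frac12\|x-x_0\|^2$, $\psi_0(y)=\frac12\|y-y_0\|^2$. For $k=1,2,\dots$: $a_k=\frac{\sqrt{(1+\sigma A_{k-1})(1+\gamma A_{k-1})}}{\sqrt2R}$, $A_k=A_{k-1}+a_k$;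 $\bar x_{k-1}=x_{k-1}+\frac{a_{k-1}}{a_k}(x_{k-1}-x_{k-2})$; $\psi_k(y)=\psi_{k-1}(y)+a_k(\langle-B\bar x_{k-1},y-v\rangle+g^*(y))$, $y_k=\arg\min_{y}\psi_k(y)$; $\phi_k(x)=\phi_{k-1}(x)+a_k(\langle x-u,B^Ty_k\rangle+\ell(x))$, $x_k=\arg\min_x\phi_k(x)$. *)

theory Defs
  imports "HOL-Analysis.Analysis" "HOL-Library.Extended_Real"
begin

definition proper_fun :: "('a \<Rightarrow> ereal) \<Rightarrow> bool" where
  "proper_fun f \<longleftrightarrow> (\<forall>x. f x \<noteq> -\<infinity>) \<and> (\<exists>x. f x \<noteq> \<infinity>)"

definition lsc_fun :: "('a::topological_space \<Rightarrow> ereal) \<Rightarrow> bool" where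
  "lsc_fun f \<longleftrightarrow> (\<forall>x. f x \<le> Liminf (at x) f)"

definition strongly_convex_fun :: "real \<Rightarrow> ('a::real_normed_vector \<Rightarrow> ereal) \<Rightarrow> bool" where
  "strongly_convex_fun \<sigma> f \<longleftrightarrow>
     (\<forall>x xh \<alpha>. 0 < \<alpha> \<and> \<alpha> < 1 \<longrightarrow>
        f ((1 - \<alpha>) *\<^sub>R x + \<alpha> *\<^sub>R xh)
          \<le> ereal (1 - \<alpha>) * f x + ereal \<alpha> * f xh
             - ereal (\<sigma> / 2 * \<alpha> * (1 - \<alpha>) * (norm (xh - x))\<^sup>2))"

definition edom :: "('a \<Rightarrow> ereal) \<Rightarrow> 'a set" where
  "edom f = {x. f x < \<infinity>}"

fun pdaA :: "real \<Rightarrow> real \<Rightarrow> real \<Rightarrow> nat \<Rightarrow> real" where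
  "pdaA \<sigma> \<gamma> R 0 = 0"
| "pdaA \<sigma> \<gamma> R (Suc k) = pdaA \<sigma> \<gamma> R k
     + sqrt ((1 + \<sigma> * pdaA \<sigma> \<gamma> R k) * (1 + \<gamma> * pdaA \<sigma> \<gamma> R k)) / (sqrt 2 * R)"

fun pdaa :: "real \<Rightarrow> real \<Rightarrow> real \<Rightarrow> nat \<Rightarrow> real" where
  "pdaa \<sigma> \<gamma> R 0 = 0"
| "pdaa \<sigma> \<gamma> R (Suc k) =
     sqrt ((1 + \<sigma> * pdaA \<sigma> \<gamma> R k) * (1 + \<gamma> * pdaA \<sigma> \<gamma> R k)) / (sqrt 2 * R)"

definition pda_xbar :: "(nat \<Rightarrow> real) \<Rightarrow> (nat \<Rightarrow> 'a::real_vector) \<Rightarrow> nat \<Rightarrow> 'a" where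
  "pda_xbar a x j = x j + (a j / a (Suc j)) *\<^sub>R (x j - (if j = 0 then x 0 else x (j - 1)))"

fun pda_psi :: "real^'d^'n \<Rightarrow> (real^'n \<Rightarrow> ereal) \<Rightarrow> (nat \<Rightarrow> real) \<Rightarrow> (nat \<Rightarrow> real^'d)
                 \<Rightarrow> real^'n \<Rightarrow> real^'n \<Rightarrow> nat \<Rightarrow> real^'n \<Rightarrow> ereal" where
  "pda_psi B gs a x y0 v 0 y = ereal ((norm (y - y0))\<^sup>2 / 2)"
| "pda_psi B gs a x y0 v (Suc k) y = pda_psi B gs a x y0 v k y
     + ereal (a (Suc k)) * (ereal (inner (- (B *v pda_xbar a x k)) (y - v)) + gs y)"

fun pda_phi :: "real^'d^'n \<Rightarrow> (real^'d \<Rightarrow> ereal) \<Rightarrow> (nat \<Rightarrow> real) \<Rightarrow> (nat \<Rightarrow> real^'n)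
                 \<Rightarrow> real^'d \<Rightarrow> real^'d \<Rightarrow> nat \<Rightarrow> real^'d \<Rightarrow> ereal" where
  "pda_phi B l a y x0 u 0 x = ereal ((norm (x - x0))\<^sup>2 / 2)"
| "pda_phi B l a y x0 u (Suc k) x = pda_phi B l a y x0 u k x
     + ereal (a (Suc k)) * (ereal (inner (x - u) (transpose B *v y (Suc k))) + l x)"

end

theory Submission
  imports Defs
begin



lemma ereal_step:
  fixes g :: ereal
  assumes "g \<noteq> -\<infinity>" "A \<ge> 0" "a > 0"
  shows "ereal q + ereal A * g + ereal a * (ereal t + g) = ereal (q + a*t) + ereal (A+a) * g"
  using assms by (cases g) (auto simp: algebra_simps)

lemma lim_aux:
  fixes t c :: real
  assumes "\<And>\<alpha>. 0 < \<alpha> \<Longrightarrow> \<alpha> < 1 \<Longrightarrow> t * (1 - \<alpha>) \<le> c"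
  shows "t \<le> c"
proof (rule ccontr)
  assume "\<not> t \<le> c"
  hence tc: "t > c" by simp
  have "t * (1 - 1/2) \<le> c" using assms[of "1/2"] by simp
  hence tpos: "t > 0" using tc by simp
  define \<beta> where "\<beta> = (t - c) / (2*t)"
  define \<alpha> where "\<alpha> = min (1/2) \<beta>"
  have b0: "0 < \<beta>" using tc tpos by (simp add: \<beta>_def)
  have "0 < \<alpha>" "\<alpha> < 1" using b0 by (auto simp: \<alpha>_def)
  from assms[OF this] have "t * (1 - \<alpha>) \<le> c" .
  moreover have "t * (1 - \<beta>) \<le> t * (1 - \<alpha>)" using tpos by (intro mult_left_mono) (auto simp: \<alpha>_def)
  moreover have "t * (1 - \<beta>) = (t + c) / 2" using tpos by (simp add: \<beta>_def field_simps)
  ultimately show False using tc by simp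
qed

lemma quad_id:
  fixes z v y0 :: "'a::real_inner" and \<alpha> :: real
  shows "(norm ((1-\<alpha>) *\<^sub>R z + \<alpha> *\<^sub>R v - y0))\<^sup>2 =
     (1-\<alpha>) * (norm (z - y0))\<^sup>2 + \<alpha> * (norm (v - y0))\<^sup>2 - \<alpha> * (1-\<alpha>) * (norm (v - z))\<^sup>2"
proof -
  have e: "(1-\<alpha>) *\<^sub>R z + \<alpha> *\<^sub>R v - y0 = (1-\<alpha>) *\<^sub>R (z - y0) + \<alpha> *\<^sub>R (v - y0)"
    by (simp add: algebra_simps)
  have e2: "v - z = (v - y0) - (z - y0)" by simp
  show ?thesis unfolding e e2 power2_norm_eq_inner
    by (simp add: inner_add_left inner_add_right inner_diff_left inner_diff_right inner_commute algebra_simps power2_eq_square)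
qed

lemma key:
  fixes F G :: "'a::real_inner \<Rightarrow> ereal" and c v y0 z :: 'a
  assumes rep: "\<And>y. F y = ereal ((norm (y - y0))\<^sup>2 / 2 + inner c (y - v)) + ereal A * G y"
    and Apos: "A > 0" and Gninf: "\<And>y. G y \<noteq> -\<infinity>"
    and Gsc: "strongly_convex_fun \<gamma> G"
    and zmin: "\<And>w. F z \<le> F w"
  shows "F z \<le> ereal A * G v + ereal ((norm (v - y0))\<^sup>2 / 2) - ereal ((1 + \<gamma> * A) / 2 * (norm (v - z))\<^sup>2)"
proof (cases "G v")
  case PInf
  then show ?thesis using Apos by simp
next
  case MInf then show ?thesis using Gninf by simp
next
  case (real gv)
  define q where "q y = (norm (y - y0))\<^sup>2 / 2 + inner c (y - v)" for y
  have Fv: "F v = ereal (q v + A * gv)" using rep real by (simp add: q_def)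
  obtain gz where gz: "G z = ereal gz"
  proof (cases "G z")
    case PInf
    then have "F z = \<infinity>" using rep Apos by simp
    with zmin[of v] Fv show ?thesis by simp
  qed (use Gninf in auto)
  have Fz: "F z = ereal (q z + A * gz)" using rep gz by (simp add: q_def)
  define d where "d = (norm (v - z))\<^sup>2"
  have main: "(1 + \<gamma> * A) / 2 * d * (1 - \<alpha>) \<le> (q v + A * gv) - (q z + A * gz)"
    if a: "0 < \<alpha>" "\<alpha> < 1" for \<alpha>
  proof -
    define w where "w = (1 - \<alpha>) *\<^sub>R z + \<alpha> *\<^sub>R v"
    have Gw: "G w \<le> ereal ((1 - \<alpha>) * gz + \<alpha> * gv - \<gamma> / 2 * \<alpha> * (1 - \<alpha>) * d)"
    proof -
      have "G w \<le> ereal (1 - \<alpha>) * G z + ereal \<alpha> * G v - ereal (\<gamma> / 2 * \<alpha> * (1 - \<alpha>) * (norm (v - z))\<^sup>2)"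
        using Gsc a unfolding strongly_convex_fun_def w_def by blast
      then show ?thesis using gz real by (simp add: d_def)
    qed
    have qw: "q w = (1-\<alpha>) * q z + \<alpha> * q v - \<alpha> * (1 - \<alpha>) * d / 2"
    proof -
      have "inner c (w - v) = (1-\<alpha>) * inner c (z - v) + \<alpha> * inner c (v - v)"
        unfolding w_def by (simp add: inner_diff_right inner_add_right algebra_simps)
      moreover have "(norm (w - y0))\<^sup>2 = (1-\<alpha>) * (norm (z - y0))\<^sup>2 + \<alpha> * (norm (v - y0))\<^sup>2 - \<alpha> * (1-\<alpha>) * d"
        using quad_id[of \<alpha> z v y0] unfolding w_def d_def .
      ultimately show ?thesis unfolding q_def by (simp add: algebra_simps add_divide_distrib diff_divide_distrib)
    qed
    have "F z \<le> F w" by (rule zmin)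
    also have "F w \<le> ereal (q w) + ereal A * ereal ((1 - \<alpha>) * gz + \<alpha> * gv - \<gamma> / 2 * \<alpha> * (1 - \<alpha>) * d)"
      unfolding rep q_def[symmetric] using Gw Apos
      by (intro add_left_mono ereal_mult_left_mono) auto
    finally have "q z + A * gz \<le> q w + A * ((1 - \<alpha>) * gz + \<alpha> * gv - \<gamma> / 2 * \<alpha> * (1 - \<alpha>) * d)"
      using Fz by simp
    hence "\<alpha> * (q z + A * gz) \<le> \<alpha> * ((q v + A * gv) - (1 + \<gamma> * A) / 2 * d * (1 - \<alpha>))"
      unfolding qw by (simp add: algebra_simps add_divide_distrib diff_divide_distrib)
    hence "q z + A * gz \<le> (q v + A * gv) - (1 + \<gamma> * A) / 2 * d * (1 - \<alpha>)"
      using a by simp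
    then show ?thesis by simp
  qed
  have "(1 + \<gamma> * A) / 2 * d \<le> (q v + A * gv) - (q z + A * gz)"
    by (rule lim_aux) (use main in auto)
  then show ?thesis using Fz real by (simp add: q_def d_def)
qed

lemma pdaA_nonneg: "0 \<le> \<sigma> \<Longrightarrow> 0 \<le> \<gamma> \<Longrightarrow> 0 < R \<Longrightarrow> 0 \<le> pdaA \<sigma> \<gamma> R k"
  by (induction k) auto

lemma pdaa_pos:
  assumes "0 \<le> \<sigma>" "0 \<le> \<gamma>" "0 < R"
  shows "0 < pdaa \<sigma> \<gamma> R (Suc k)"
proof -
  have "0 \<le> pdaA \<sigma> \<gamma> R k" using pdaA_nonneg assms by blast
  hence "0 < (1 + \<sigma> * pdaA \<sigma> \<gamma> R k) * (1 + \<gamma> * pdaA \<sigma> \<gamma> R k)"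
    using assms by (intro mult_pos_pos) (auto intro: add_pos_nonneg)
  then show ?thesis using assms by simp
qed

lemma pdaA_Suc': "pdaA \<sigma> \<gamma> R (Suc k) = pdaA \<sigma> \<gamma> R k + pdaa \<sigma> \<gamma> R (Suc k)"
  by simp

lemma psi_rep:
  assumes "0 \<le> \<sigma>" "0 \<le> \<gamma>" "0 < R" "\<And>y. gs y \<noteq> -\<infinity>"
  shows "\<exists>c. \<forall>y. pda_psi B gs (pdaa \<sigma> \<gamma> R) x y0 v k y
     = ereal ((norm (y - y0))\<^sup>2 / 2 + inner c (y - v)) + ereal (pdaA \<sigma> \<gamma> R k) * gs y"
proof (induction k)
  case 0
  show ?case by (rule exI[of _ 0]) (simp add: zero_ereal_def[symmetric])
next
  case (Suc k)
  then obtain c where c: "\<And>y. pda_psi B gs (pdaa \<sigma> \<gamma> R) x y0 v k y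
     = ereal ((norm (y - y0))\<^sup>2 / 2 + inner c (y - v)) + ereal (pdaA \<sigma> \<gamma> R k) * gs y" by blast
  define d where "d = - (B *v pda_xbar (pdaa \<sigma> \<gamma> R) x k)"
  show ?case
  proof (rule exI[of _ "c + pdaa \<sigma> \<gamma> R (Suc k) *\<^sub>R d"], rule allI)
    fix y
    have "pda_psi B gs (pdaa \<sigma> \<gamma> R) x y0 v (Suc k) y =
      ereal ((norm (y - y0))\<^sup>2 / 2 + inner c (y - v)) + ereal (pdaA \<sigma> \<gamma> R k) * gs y
      + ereal (pdaa \<sigma> \<gamma> R (Suc k)) * (ereal (inner d (y - v)) + gs y)"
      by (simp add: c d_def)
    also have "\<dots> = ereal ((norm (y - y0))\<^sup>2 / 2 + inner c (y - v) + pdaa \<sigma> \<gamma> R (Suc k) * inner d (y - v))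
       + ereal (pdaA \<sigma> \<gamma> R k + pdaa \<sigma> \<gamma> R (Suc k)) * gs y"
      by (rule ereal_step) (use assms pdaA_nonneg pdaa_pos in auto)
    also have "\<dots> = ereal ((norm (y - y0))\<^sup>2 / 2 + inner (c + pdaa \<sigma> \<gamma> R (Suc k) *\<^sub>R d) (y - v))
       + ereal (pdaA \<sigma> \<gamma> R (Suc k)) * gs y"
      by (simp add: inner_add_left pdaA_Suc' add.assoc del: pdaa.simps pdaA.simps)
    finally show "pda_psi B gs (pdaa \<sigma> \<gamma> R) x y0 v (Suc k) y = ereal ((norm (y - y0))\<^sup>2 / 2 + inner (c + pdaa \<sigma> \<gamma> R (Suc k) *\<^sub>R d) (y - v))
       + ereal (pdaA \<sigma> \<gamma> R (Suc k)) * gs y" .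
  qed
qed

lemma phi_rep:
  assumes "0 \<le> \<sigma>" "0 \<le> \<gamma>" "0 < R" "\<And>y. l y \<noteq> -\<infinity>"
  shows "\<exists>c. \<forall>x. pda_phi B l (pdaa \<sigma> \<gamma> R) y x0 u k x
     = ereal ((norm (x - x0))\<^sup>2 / 2 + inner c (x - u)) + ereal (pdaA \<sigma> \<gamma> R k) * l x"
proof (induction k)
  case 0
  show ?case by (rule exI[of _ 0]) (simp add: zero_ereal_def[symmetric])
next
  case (Suc k)
  then obtain c where c: "\<And>x. pda_phi B l (pdaa \<sigma> \<gamma> R) y x0 u k x
     = ereal ((norm (x - x0))\<^sup>2 / 2 + inner c (x - u)) + ereal (pdaA \<sigma> \<gamma> R k) * l x" by blast
  define d where "d = transpose B *v y (Suc k)"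
  show ?case
  proof (rule exI[of _ "c + pdaa \<sigma> \<gamma> R (Suc k) *\<^sub>R d"], rule allI)
    fix x
    have "pda_phi B l (pdaa \<sigma> \<gamma> R) y x0 u (Suc k) x =
      ereal ((norm (x - x0))\<^sup>2 / 2 + inner c (x - u)) + ereal (pdaA \<sigma> \<gamma> R k) * l x
      + ereal (pdaa \<sigma> \<gamma> R (Suc k)) * (ereal (inner d (x - u)) + l x)"
      by (simp add: c d_def inner_commute)
    also have "\<dots> = ereal ((norm (x - x0))\<^sup>2 / 2 + inner c (x - u) + pdaa \<sigma> \<gamma> R (Suc k) * inner d (x - u))
       + ereal (pdaA \<sigma> \<gamma> R k + pdaa \<sigma> \<gamma> R (Suc k)) * l x"
      by (rule ereal_step) (use assms pdaA_nonneg pdaa_pos in auto)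
    also have "\<dots> = ereal ((norm (x - x0))\<^sup>2 / 2 + inner (c + pdaa \<sigma> \<gamma> R (Suc k) *\<^sub>R d) (x - u))
       + ereal (pdaA \<sigma> \<gamma> R (Suc k)) * l x"
      by (simp add: inner_add_left pdaA_Suc' add.assoc del: pdaa.simps pdaA.simps)
    finally show "pda_phi B l (pdaa \<sigma> \<gamma> R) y x0 u (Suc k) x = ereal ((norm (x - x0))\<^sup>2 / 2 + inner (c + pdaa \<sigma> \<gamma> R (Suc k) *\<^sub>R d) (x - u))
       + ereal (pdaA \<sigma> \<gamma> R (Suc k)) * l x" .
  qed
qed


theorem lemma1:
  fixes B :: "real^'d^'n" and R \<sigma> \<gamma> :: real
    and gs :: "real^'n \<Rightarrow> ereal" and l :: "real^'d \<Rightarrow> ereal"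
    and x :: "nat \<Rightarrow> real^'d" and y :: "nat \<Rightarrow> real^'n"
    and u :: "real^'d" and v :: "real^'n"
  assumes normB: "onorm (\<lambda>z. B *v z) = R" and Rpos: "0 < R"
    and gs_proper: "proper_fun gs" and gs_lsc: "lsc_fun gs"
    and gs_sc: "strongly_convex_fun \<gamma> gs" and gamma_nonneg: "0 \<le> \<gamma>"
    and l_proper: "proper_fun l" and l_lsc: "lsc_fun l"
    and l_sc: "strongly_convex_fun \<sigma> l" and sigma_nonneg: "0 \<le> \<sigma>"
    and x0_dom: "x 0 \<in> edom l" and y0_dom: "y 0 \<in> edom gs"
    and u_dom: "u \<in> edom l" and v_dom: "v \<in> edom gs"
    and y_min: "\<And>k z. k \<ge> 1 \<Longrightarrow>
       pda_psi B gs (pdaa \<sigma> \<gamma> R) x (y 0) v k (y k) \<le> pda_psi B gs (pdaa \<sigma> \<gamma> R) x (y 0) v k z"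
    and x_min: "\<And>k z. k \<ge> 1 \<Longrightarrow>
       pda_phi B l (pdaa \<sigma> \<gamma> R) y (x 0) u k (x k) \<le> pda_phi B l (pdaa \<sigma> \<gamma> R) y (x 0) u k z"
    and k1: "k \<ge> 1"
  shows "pda_psi B gs (pdaa \<sigma> \<gamma> R) x (y 0) v k (y k)
           \<le> ereal (pdaA \<sigma> \<gamma> R k) * gs v + ereal ((norm (v - y 0))\<^sup>2 / 2)
              - ereal ((1 + \<gamma> * pdaA \<sigma> \<gamma> R k) / 2 * (norm (v - y k))\<^sup>2)
       \<and> pda_phi B l (pdaa \<sigma> \<gamma> R) y (x 0) u k (x k)
           \<le> ereal (pdaA \<sigma> \<gamma> R k) * l u + ereal ((norm (u - x 0))\<^sup>2 / 2)
              - ereal ((1 + \<sigma> * pdaA \<sigma> \<gamma> R k) / 2 * (norm (u - x k))\<^sup>2)"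
  proof -
  have gsn: "\<And>y. gs y \<noteq> -\<infinity>" and ln: "\<And>x. l x \<noteq> -\<infinity>"
    using gs_proper l_proper unfolding proper_fun_def by auto
  obtain k' where kk: "k = Suc k'" using k1 by (cases k) auto
  have Apos: "pdaA \<sigma> \<gamma> R k > 0" unfolding kk pdaA_Suc'
    using pdaA_nonneg[OF sigma_nonneg gamma_nonneg Rpos] pdaa_pos[OF sigma_nonneg gamma_nonneg Rpos]
    by (meson add_nonneg_pos)
  obtain c where c: "\<And>w. pda_psi B gs (pdaa \<sigma> \<gamma> R) x (y 0) v k w
     = ereal ((norm (w - y 0))\<^sup>2 / 2 + inner c (w - v)) + ereal (pdaA \<sigma> \<gamma> R k) * gs w"
    using psi_rep[of \<sigma> \<gamma> R gs B x "y 0" v k] sigma_nonneg gamma_nonneg Rpos gsn by blast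
  obtain c' where c': "\<And>w. pda_phi B l (pdaa \<sigma> \<gamma> R) y (x 0) u k w
     = ereal ((norm (w - x 0))\<^sup>2 / 2 + inner c' (w - u)) + ereal (pdaA \<sigma> \<gamma> R k) * l w"
    using phi_rep[of \<sigma> \<gamma> R l B y "x 0" u k] sigma_nonneg gamma_nonneg Rpos ln by blast
  show ?thesis
  proof
    show "pda_psi B gs (pdaa \<sigma> \<gamma> R) x (y 0) v k (y k)
           \<le> ereal (pdaA \<sigma> \<gamma> R k) * gs v + ereal ((norm (v - y 0))\<^sup>2 / 2)
              - ereal ((1 + \<gamma> * pdaA \<sigma> \<gamma> R k) / 2 * (norm (v - y k))\<^sup>2)"
      by (rule key[OF c Apos gsn gs_sc y_min[OF k1]])
    show "pda_phi B l (pdaa \<sigma> \<gamma> R) y (x 0) u k (x k)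
           \<le> ereal (pdaA \<sigma> \<gamma> R k) * l u + ereal ((norm (u - x 0))\<^sup>2 / 2)
              - ereal ((1 + \<sigma> * pdaA \<sigma> \<gamma> R k) / 2 * (norm (u - x k))\<^sup>2)"
      by (rule key[OF c' Apos ln l_sc x_min[OF k1]])
  qed
qed

end
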